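(* Let $(P)$ be a property of C*-algebras. Assume: (1) the zero C*-algebra has $(P)$; (2) whenever $A$ is a C*-algebra and $I, J \subseteq A$ are ideals with $(P)$, then $I + J$ has $(P)$; (3) whenever $A$ is a C*-algebra, $\Lambda$ is a directed set, and $(I_\lambda)_{\lambda \in \Lambda}$ is a family of ideals of $A$ with $(P)$ such that $I_\lambda \subseteq I_\mu$ whenever $\lambda \le \mu$, then $\overline{\bigcup_{\lambda \in \Lambda} I_\lambda}$ has $(P)$. Then $(P)$ admits largest ideals.
   Context: All ideals are closed two-sided. $(P)$ admits largest ideals if for every C*-algebra $A$ there is an ideal $I \subseteq A$ with $(P)$ such that every ideal $J \subseteq A$ with $(P)$ satisfies $J \subseteq I$. *)

theory Defs
  imports "HOL-Analysis.Analysis"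
begin

class cstar_algebra = real_normed_algebra + banach +
  fixes scaleC :: "complex \<Rightarrow> 'a \<Rightarrow> 'a"
    and cstar :: "'a \<Rightarrow> 'a"
  assumes scaleC_add_right: "scaleC c (x + y) = scaleC c x + scaleC c y"
    and scaleC_add_left: "scaleC (b + c) x = scaleC b x + scaleC c x"
    and scaleC_scaleC: "scaleC b (scaleC c x) = scaleC (b * c) x"
    and scaleC_one: "scaleC 1 x = x"
    and scaleR_scaleC: "scaleR r x = scaleC (complex_of_real r) x"
    and norm_scaleC: "norm (scaleC c x) = cmod c * norm x"
    and mult_scaleC_left: "scaleC c x * y = scaleC c (x * y)"
    and mult_scaleC_right: "x * scaleC c y = scaleC c (x * y)"
    and cstar_cstar: "cstar (cstar x) = x"
    and cstar_add: "cstar (x + y) = cstar x + cstar y"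
    and cstar_scaleC: "cstar (scaleC c x) = scaleC (cnj c) (cstar x)"
    and cstar_mult: "cstar (x * y) = cstar y * cstar x"
    and cstar_identity: "norm (cstar x * x) = norm x ^ 2"

definition cstar_ideal :: "'a::cstar_algebra set \<Rightarrow> bool" where
  "cstar_ideal I \<longleftrightarrow> closed I \<and> 0 \<in> I
     \<and> (\<forall>x\<in>I. \<forall>y\<in>I. x + y \<in> I)
     \<and> (\<forall>c. \<forall>x\<in>I. scaleC c x \<in> I)
     \<and> (\<forall>a. \<forall>x\<in>I. a * x \<in> I \<and> x * a \<in> I)"

definition directed_set :: "'i set \<Rightarrow> ('i \<Rightarrow> 'i \<Rightarrow> bool) \<Rightarrow> bool" where
  "directed_set L le \<longleftrightarrow> L \<noteq> {}
     \<and> (\<forall>x\<in>L. le x x)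
     \<and> (\<forall>x\<in>L. \<forall>y\<in>L. \<forall>z\<in>L. le x y \<longrightarrow> le y z \<longrightarrow> le x z)
     \<and> (\<forall>x\<in>L. \<forall>y\<in>L. \<exists>z\<in>L. le x z \<and> le y z)"

end

theory Submission
  imports Defs
begin
context cstar_algebra begin

lemma scaleC_zero_right[simp]: "scaleC c 0 = 0"
  using scaleC_add_right[of c 0 0] by simp

lemma scaleC_zero_left[simp]: "scaleC 0 x = 0"
  using scaleC_add_left[of 0 0 x] by simp

lemma scaleC_minus_right[simp]: "scaleC c (- x) = - scaleC c x"
proof -
  have "scaleC c x + scaleC c (-x) = 0" using scaleC_add_right[of c x "-x"] by simp
  thus ?thesis by (metis neg_eq_iff_add_eq_0)
qed

lemma scaleC_minus_left[simp]: "scaleC (- c) x = - scaleC c x"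
proof -
  have "scaleC c x + scaleC (-c) x = 0" using scaleC_add_left[of c "-c" x] by simp
  thus ?thesis by (metis neg_eq_iff_add_eq_0)
qed

lemma scaleC_diff_right: "scaleC c (x - y) = scaleC c x - scaleC c y"
  using scaleC_add_right[of c x "-y"] by simp

lemma scaleC_diff_left: "scaleC (b - c) x = scaleC b x - scaleC c x"
  using scaleC_add_left[of b "-c" x] by simp

lemma cstar_zero[simp]: "cstar 0 = 0"
  using cstar_add[of 0 0] by simp

lemma cstar_minus[simp]: "cstar (- x) = - cstar x"
proof -
  have "cstar x + cstar (-x) = 0" using cstar_add[of x "-x"] by simp
  thus ?thesis by (metis neg_eq_iff_add_eq_0)
qed

lemma cstar_diff: "cstar (x - y) = cstar x - cstar y"
  using cstar_add[of x "-y"] by simp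

lemma norm_cstar[simp]: "norm (cstar x) = norm x"
proof -
  have le: "norm y \<le> norm (cstar y)" for y
  proof (cases "y = 0")
    case False
    have "norm y ^ 2 = norm (cstar y * y)" by (simp add: cstar_identity)
    also have "\<dots> \<le> norm (cstar y) * norm y" by (rule norm_mult_ineq)
    finally show ?thesis using False by (simp add: power2_eq_square)
  qed simp
  show ?thesis using le[of x] le[of "cstar x"] by (simp add: cstar_cstar)
qed

lemma cstar_identity2: "norm (x * cstar x) = norm x ^ 2"
  using cstar_identity[of "cstar x"] by (simp add: cstar_cstar)

end

datatype 'a uz = UZ complex 'a

fun sc :: "'a uz \<Rightarrow> complex" where "sc (UZ a x) = a"
fun cpt :: "'a uz \<Rightarrow> 'a" where "cpt (UZ a x) = x"

instantiation uz :: (cstar_algebra) ring_1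
begin
definition "0 = UZ 0 0"
definition "1 = UZ 1 0"
fun plus_uz where "plus_uz (UZ a x) (UZ b y) = UZ (a + b) (x + y)"
fun minus_uz where "minus_uz (UZ a x) (UZ b y) = UZ (a - b) (x - y)"
fun uminus_uz where "uminus_uz (UZ a x) = UZ (- a) (- x)"
fun times_uz where "times_uz (UZ a x) (UZ b y) = UZ (a * b) (scaleC a y + scaleC b x + x * y)"
instance
proof
  fix X Y Z :: "'a uz"
  show "X * Y * Z = X * (Y * Z)"
    by (cases X; cases Y; cases Z) (simp add: algebra_simps scaleC_add_right scaleC_scaleC
        mult_scaleC_left mult_scaleC_right mult.commute)
  show "(X + Y) * Z = X * Z + Y * Z"
    by (cases X; cases Y; cases Z) (simp add: algebra_simps scaleC_add_right scaleC_add_left)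
  show "X * (Y + Z) = X * Y + X * Z"
    by (cases X; cases Y; cases Z) (simp add: algebra_simps scaleC_add_right scaleC_add_left)
  show "X + Y + Z = X + (Y + Z)"
    by (cases X; cases Y; cases Z) (simp add: algebra_simps)
  show "X + Y = Y + X"
    by (cases X; cases Y) (simp add: algebra_simps)
  show "0 + X = X" by (cases X) (simp add: zero_uz_def)
  show "- X + X = 0" by (cases X) (simp add: zero_uz_def)
  show "X - Y = X + - Y" by (cases X; cases Y) simp
  show "1 * X = X" by (cases X) (simp add: one_uz_def scaleC_one)
  show "X * 1 = X" by (cases X) (simp add: one_uz_def scaleC_one)
  show "(0::'a uz) \<noteq> 1" by (simp add: zero_uz_def one_uz_def)
qed
end


lemma uz_eta: "X = UZ (sc X) (cpt X)" by (cases X) simp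

lemma uz_simps[simp]:
  "sc (X + Y) = sc X + sc Y" "cpt (X + Y) = cpt X + cpt Y"
  "sc (X - Y) = sc X - sc Y" "cpt (X - Y) = cpt X - cpt Y"
  "sc (- X) = - sc X" "cpt (- X) = - cpt X"
  "sc (X * Y) = sc X * sc Y"
  "cpt (X * Y) = scaleC (sc X) (cpt Y) + scaleC (sc Y) (cpt X) + cpt X * cpt Y"
  "sc (0::'a::cstar_algebra uz) = 0" "cpt (0::'a::cstar_algebra uz) = 0"
  "sc (1::'a::cstar_algebra uz) = 1" "cpt (1::'a::cstar_algebra uz) = 0"
  for X Y :: "'a::cstar_algebra uz"
  by (cases X; cases Y; simp add: zero_uz_def one_uz_def)+

lemma uz_eqI: "sc X = sc Y \<Longrightarrow> cpt X = cpt Y \<Longrightarrow> X = Y"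
  by (metis uz_eta)

lemma sc_sum: "sc (sum f S) = (\<Sum>i\<in>S. sc (f i :: 'a::cstar_algebra uz))"
  by (induction S rule: infinite_finite_induct) auto

lemma cpt_sum: "cpt (sum f S) = (\<Sum>i\<in>S. cpt (f i :: 'a::cstar_algebra uz))"
  by (induction S rule: infinite_finite_induct) auto

lemma sc_power: "sc (X ^ n) = sc (X :: 'a::cstar_algebra uz) ^ n"
  by (induction n) auto

definition ustar :: "'a::cstar_algebra uz \<Rightarrow> 'a uz" where
  "ustar X = UZ (cnj (sc X)) (cstar (cpt X))"

lemma ustar_simps[simp]: "sc (ustar X) = cnj (sc X)" "cpt (ustar X) = cstar (cpt X)"
  by (simp_all add: ustar_def)

lemma ustar_mult: "ustar (X * Y) = ustar Y * ustar X"
  by (rule uz_eqI) (simp_all add: cstar_add cstar_scaleC cstar_mult algebra_simps)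

lemma ustar_add: "ustar (X + Y) = ustar X + ustar Y"
  by (rule uz_eqI) (simp_all add: cstar_add)

lemma ustar_diff: "ustar (X - Y) = ustar X - ustar Y"
  by (rule uz_eqI) (simp_all add: cstar_diff)

lemma ustar_one[simp]: "ustar 1 = 1"
  by (rule uz_eqI) simp_all

lemma ustar_ustar[simp]: "ustar (ustar X) = X"
  by (rule uz_eqI) (simp_all add: cstar_cstar)

lemma ustar_power: "ustar (X ^ n) = (ustar X) ^ n"
proof (induction n)
  case (Suc n)
  have "ustar (X ^ Suc n) = ustar (X ^ n * X)" by (simp only: power_Suc2)
  also have "\<dots> = ustar X * ustar (X ^ n)" by (simp add: ustar_mult)
  finally show ?case using Suc by simp
qed simp

lemma ustar_zero[simp]: "ustar 0 = 0"
  by (rule uz_eqI) simp_all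

lemma ustar_sum: "ustar (sum f S) = (\<Sum>i\<in>S. ustar (f i))"
  by (induction S rule: infinite_finite_induct) (auto simp: ustar_add)

definition act :: "'a::cstar_algebra \<Rightarrow> 'a uz \<Rightarrow> 'a" where
  "act z X = scaleC (sc X) z + z * cpt X"

definition lact :: "'a::cstar_algebra uz \<Rightarrow> 'a \<Rightarrow> 'a" where
  "lact X z = scaleC (sc X) z + cpt X * z"

lemma act_eq: "UZ 0 z * X = UZ 0 (act z X)"
  by (cases X) (simp add: act_def)

lemma lact_eq: "X * UZ 0 z = UZ 0 (lact X z)"
  by (cases X) (simp add: lact_def)

lemma UZ0_mult: "UZ 0 a * UZ 0 b = UZ 0 (a * b)" by simp

lemma ustar_UZ0: "ustar (UZ 0 z) = UZ 0 (cstar z)" by (simp add: ustar_def)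

lemma act_unitary:
  assumes "X * ustar X = 1"
  shows "norm (act z X) = norm z"
proof -
  have "UZ 0 (act z X * cstar (act z X)) = UZ 0 (act z X) * ustar (UZ 0 (act z X))"
    by (simp add: ustar_UZ0)
  also have "\<dots> = UZ 0 z * (X * ustar X) * ustar (UZ 0 z)"
    by (simp add: act_eq[symmetric] ustar_mult mult.assoc)
  also have "\<dots> = UZ 0 (z * cstar z)" using assms by (simp add: ustar_UZ0)
  finally have "act z X * cstar (act z X) = z * cstar z" by simp
  hence "norm (act z X) ^ 2 = norm z ^ 2" by (metis cstar_identity2)
  thus ?thesis by (simp add: power2_eq_iff_nonneg)
qed

lemma lact_unitary:
  assumes "ustar X * X = 1"
  shows "norm (lact X z) = norm z"
proof -
  have "UZ 0 (cstar (lact X z) * lact X z) = ustar (UZ 0 (lact X z)) * UZ 0 (lact X z)"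
    by (simp add: ustar_UZ0)
  also have "\<dots> = ustar (UZ 0 z) * (ustar X * X) * UZ 0 z"
    by (simp add: lact_eq[symmetric] ustar_mult mult.assoc)
  also have "\<dots> = UZ 0 (cstar z * z)" using assms by (simp add: ustar_UZ0)
  finally have "cstar (lact X z) * lact X z = cstar z * z" by simp
  hence "norm (lact X z) ^ 2 = norm z ^ 2" by (metis cstar_identity)
  thus ?thesis by (simp add: power2_eq_iff_nonneg)
qed

lemma act_add_left: "act (z + w) X = act z X + act w X"
  by (simp add: act_def scaleC_add_right algebra_simps)

lemma act_diff_left: "act (z - w) X = act z X - act w X"
  by (simp add: act_def scaleC_diff_right algebra_simps)

lemma act_scaleC_left: "act (scaleC c z) X = scaleC c (act z X)"
  by (simp add: act_def scaleC_add_right scaleC_scaleC mult_scaleC_left mult.commute)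

lemma act_sum_right: "act z (sum f S) = (\<Sum>i\<in>S. act z (f i))"
  by (induction S rule: infinite_finite_induct)
     (auto simp: act_def sc_sum cpt_sum scaleC_add_left algebra_simps sum_distrib_left)

lemma lact_sum_left: "lact (sum f S) z = (\<Sum>i\<in>S. lact (f i) z)"
  by (induction S rule: infinite_finite_induct)
     (auto simp: lact_def sc_sum cpt_sum scaleC_add_left algebra_simps sum_distrib_right)

lemma ideal_facts:
  assumes "cstar_ideal I"
  shows "0 \<in> I" "closed I" "\<And>x y. x \<in> I \<Longrightarrow> y \<in> I \<Longrightarrow> x + y \<in> I"
    "\<And>c x. x \<in> I \<Longrightarrow> scaleC c x \<in> I"
    "\<And>a x. x \<in> I \<Longrightarrow> a * x \<in> I" "\<And>a x. x \<in> I \<Longrightarrow> x * a \<in> I"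
  using assms unfolding cstar_ideal_def by blast+

lemma ideal_neg: "cstar_ideal I \<Longrightarrow> x \<in> I \<Longrightarrow> - x \<in> I"
proof -
  assume "cstar_ideal I" "x \<in> I"
  hence "scaleC (-1) x \<in> I" using ideal_facts(4) by blast
  thus ?thesis by (simp add: scaleC_one)
qed

lemma ideal_diff: "cstar_ideal I \<Longrightarrow> x \<in> I \<Longrightarrow> y \<in> I \<Longrightarrow> x - y \<in> I"
  using ideal_facts(3)[of I x "-y"] ideal_neg[of I y] by simp

lemma ideal_sum: "cstar_ideal I \<Longrightarrow> (\<And>i. i \<in> S \<Longrightarrow> f i \<in> I) \<Longrightarrow> sum f S \<in> I"
  by (induction S rule: infinite_finite_induct) (auto intro: ideal_facts)

lemma cpt_power_in:
  assumes "cstar_ideal J" "cpt X \<in> J"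
  shows "cpt (X ^ n) \<in> J"
proof (induction n)
  case 0 then show ?case using ideal_facts(1)[OF assms(1)] by simp
next
  case (Suc n)
  have "cpt (X ^ Suc n) = scaleC (sc X) (cpt (X ^ n)) + scaleC (sc (X ^ n)) (cpt X) + cpt X * cpt (X ^ n)"
    by (simp only: power_Suc uz_simps)
  then show ?case using Suc assms by (simp add: ideal_facts)
qed

lemma unitary_power:
  assumes "X * ustar X = 1"
  shows "X ^ n * ustar X ^ n = 1"
proof (induction n)
  case (Suc n)
  have "X ^ Suc n * ustar X ^ Suc n = X ^ n * (X * ustar X) * ustar X ^ n"
    by (simp only: power_Suc2[of X] power_Suc[of "ustar X"] mult.assoc)
  then show ?case using Suc assms by simp
qed simp

lemma key_dist:
  fixes x j :: "'a::cstar_algebra"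
  assumes I: "cstar_ideal I" and J: "cstar_ideal J" and xI: "x \<in> I" and jJ: "j \<in> J" and e: "e > 0"
  shows "\<exists>k \<in> I \<inter> J. norm (x - k) \<le> norm (x - j) + e"
proof -
  define c :: real where "c = 1 / (2 * (norm j ^ 2 + 1))"
  have "0 \<le> norm j ^ 2" by simp
  hence c0: "c > 0" unfolding c_def by (simp add: add_nonneg_pos)
  define s where "s = scaleC (complex_of_real c) (cstar j * j)"
  define t where "t = scaleC \<i> s"
  have sJ: "s \<in> J" unfolding s_def using jJ J by (simp add: ideal_facts)
  have tJ: "t \<in> J" unfolding t_def using sJ J by (simp add: ideal_facts)
  have ns: "norm s = c * norm j ^ 2"
    using c0 by (simp add: s_def norm_scaleC cstar_identity)
  have "c * norm j ^ 2 \<le> 1/2"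
  proof -
    have d: "0 < 2 * (norm j ^ 2 + 1)" by (simp add: add_nonneg_pos)
    have "c * norm j ^ 2 = norm j ^ 2 / (2 * (norm j ^ 2 + 1))" by (simp add: c_def)
    also have "\<dots> \<le> 1/2" using d by (simp add: pos_divide_le_eq)
    finally show ?thesis .
  qed
  hence nt: "norm t \<le> 1/2" by (simp add: t_def norm_scaleC ns)
  have sstar: "cstar s = s"
    by (simp add: s_def cstar_scaleC cstar_mult cstar_cstar)
  have tstar: "cstar t = - t"
    by (simp add: t_def cstar_scaleC sstar)
  have lip: "norm (t * a) \<le> 1/2 * norm a" for a
    by (meson mult_right_mono norm_ge_zero norm_mult_ineq nt order_trans)
  have lip2: "norm (a * t) \<le> 1/2 * norm a" for a
    by (metis (no_types, opaque_lifting) mult.commute mult_left_mono norm_ge_zero norm_mult_ineq nt order_trans)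
  obtain r where rJ: "r \<in> J" and hr: "t + t * r = r"
  proof -
    have "\<exists>!r\<in>J. t + t * r = r"
    proof (rule Banach_fix[where c="1/2"])
      show "complete J" using ideal_facts(2)[OF J] by (simp add: complete_eq_closed)
      show "J \<noteq> {}" using ideal_facts(1)[OF J] by blast
      show "(\<lambda>r. t + t * r) ` J \<subseteq> J" using tJ J by (auto simp: ideal_facts)
      show "dist (t + t * a) (t + t * b) \<le> 1/2 * dist a b" for a b
        using lip[of "a - b"] by (simp add: dist_norm algebra_simps)
    qed auto
    thus ?thesis using that by blast
  qed
  obtain r' where hr': "t + r' * t = r'"
  proof -
    have "\<exists>!r. t + r * t = r"
    proof (rule banach_fix_type[where c="1/2"])
      show "\<forall>a b. dist (t + a * t) (t + b * t) \<le> 1/2 * dist a b"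
      proof (intro allI)
        fix a b show "dist (t + a * t) (t + b * t) \<le> 1/2 * dist a b"
          using lip2[of "a - b"] by (simp add: dist_norm algebra_simps)
      qed
    qed auto
    thus ?thesis using that by blast
  qed
  define T :: "'a uz" where "T = UZ 0 t"
  define R :: "'a uz" where "R = 1 + UZ 0 r"
  define R' :: "'a uz" where "R' = 1 + UZ 0 r'"
  have h1: "(1 - T) * R = 1"
    by (rule uz_eqI) (simp_all add: T_def R_def scaleC_one, metis hr add_diff_cancel_left' diff_add_cancel add.commute)
  have h2: "R' * (1 - T) = 1"
    by (rule uz_eqI) (simp_all add: T_def R'_def scaleC_one, metis hr' add_diff_cancel_left' diff_add_cancel add.commute)
  have "R' = R' * ((1 - T) * R)" using h1 by simp
  also have "\<dots> = R" by (simp only: mult.assoc[symmetric] h2) simp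
  finally have h3: "R * (1 - T) = 1" using h2 by simp
  define S where "S = ustar R"
  have Tst: "ustar T = - T" by (rule uz_eqI) (simp_all add: T_def tstar)
  have Tst1: "ustar (1 - T) = 1 + T" by (simp add: ustar_diff Tst)
  have h4: "S * (1 + T) = 1"
    using arg_cong[OF h1, of ustar] by (simp add: S_def ustar_mult Tst1)
  have h5: "(1 + T) * S = 1"
    using arg_cong[OF h3, of ustar] by (simp add: S_def ustar_mult Tst1)
  have TR: "T * R = R - 1" using h1 by (simp add: algebra_simps)
  have RT: "R * T = R - 1" using h3 by (simp add: algebra_simps)
  have TS: "T * S = 1 - S" using h5 by (simp add: algebra_simps)
  have ST: "S * T = 1 - S" using h4 by (simp add: algebra_simps)
  have RS2: "R * S + R * S = R + S"
  proof -
    have a: "R * S * (1 + T) = R" by (simp add: mult.assoc h4)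
    have "R * S * (1 - T) = R * (S - S * T)" by (simp add: algebra_simps)
    also have "\<dots> = R * ((1 - T) * S)" by (simp add: algebra_simps TS ST)
    also have "\<dots> = S" by (simp add: mult.assoc[symmetric] h3)
    finally have b: "R * S * (1 - T) = S" .
    have "R * S + R * S = R * S * (1 + T) + R * S * (1 - T)" by (simp add: algebra_simps)
    thus ?thesis using a b by simp
  qed
  have SR2: "S * R + S * R = R + S"
  proof -
    have a: "S * R * (1 - T) = S" by (simp add: mult.assoc h3)
    have "S * R * (1 + T) = S * (R + R * T)" by (simp add: algebra_simps)
    also have "\<dots> = S * ((1 + T) * R)" by (simp add: algebra_simps TR RT)
    also have "\<dots> = R" by (simp add: mult.assoc[symmetric] h4)
    finally have b: "S * R * (1 + T) = R" .
    have "S * R + S * R = S * R * (1 + T) + S * R * (1 - T)" by (simp add: algebra_simps)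
    thus ?thesis using a b by simp
  qed
  define U where "U = R + R - 1"
  have Ust: "ustar U = S + S - 1" by (simp add: U_def S_def ustar_add ustar_diff)
  have U1: "U * ustar U = 1"
  proof -
    have "U * ustar U = (R + R - 1) * (S + S - 1)" unfolding Ust by (simp only: U_def)
    also have "\<dots> = (R * S + R * S) + (R * S + R * S) - (R + R) - (S + S) + 1"
      by (simp add: algebra_simps)
    finally have "U * ustar U = (R * S + R * S) + (R * S + R * S) - (R + R) - (S + S) + 1" .
    thus ?thesis by (simp add: RS2)
  qed
  have U2: "ustar U * U = 1"
  proof -
    have "ustar U * U = (S + S - 1) * (R + R - 1)" unfolding Ust by (simp only: U_def)
    also have "\<dots> = (S * R + S * R) + (S * R + S * R) - (R + R) - (S + S) + 1"
      by (simp add: algebra_simps)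
    finally have "ustar U * U = (S * R + S * R) + (S * R + S * R) - (R + R) - (S + S) + 1" .
    thus ?thesis by (simp add: SR2)
  qed
  have U3: "ustar U * ustar (ustar U) = 1" using U2 by simp
  have scU: "sc U = 1" by (simp add: U_def R_def)
  have cptU: "cpt U \<in> J" using rJ J by (simp add: U_def R_def ideal_facts)
  have Um1: "U - 1 = UZ 0 (r + r)" by (rule uz_eqI) (simp_all add: U_def R_def)
  define K where "K = 3 / (2 * c)"
  obtain N :: nat where N1: "N \<ge> 1" and NK: "K \<le> real N * e ^ 2"
  proof -
    define N where "N = nat \<lceil>K / e ^ 2\<rceil> + 1"
    have "K / e ^ 2 \<le> real N" unfolding N_def by linarith
    hence "K \<le> real N * e ^ 2" using e by (simp add: pos_divide_le_eq)
    thus ?thesis using that[of N] by (simp add: N_def)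
  qed
  have Npos: "real N > 0" using N1 by simp
  define W where "W = (\<Sum>k<N. U ^ k)"
  have scW: "sc W = of_nat N" by (simp add: W_def sc_sum sc_power scU)
  have cptW: "cpt W \<in> J" unfolding W_def cpt_sum
    by (rule ideal_sum[OF J]) (rule cpt_power_in[OF J cptU])
  have Upow: "U ^ k * ustar (U ^ k) = 1" for k
    by (simp add: ustar_power unitary_power[OF U1])
  have Upow2: "ustar (ustar U ^ k) * ustar U ^ k = 1" for k
    by (simp add: ustar_power unitary_power[OF U1])
  have actW: "norm (act z W) \<le> real N * norm z" for z
  proof -
    have "norm (act z W) = norm (\<Sum>k<N. act z (U ^ k))" by (simp add: W_def act_sum_right)
    also have "\<dots> \<le> (\<Sum>k<N. norm (act z (U ^ k)))" by (rule norm_sum)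
    also have "\<dots> = real N * norm z" by (simp add: act_unitary[OF Upow])
    finally show ?thesis .
  qed
  have lactW: "norm (lact (ustar W) z) \<le> real N * norm z" for z
  proof -
    have "norm (lact (ustar W) z) = norm (\<Sum>k<N. lact (ustar U ^ k) z)"
      by (simp add: W_def ustar_sum ustar_power lact_sum_left)
    also have "\<dots> \<le> (\<Sum>k<N. norm (lact (ustar U ^ k) z))" by (rule norm_sum)
    also have "\<dots> = real N * norm z" by (simp add: lact_unitary[OF Upow2])
    finally show ?thesis .
  qed
  have tel: "(U - 1) * W = U ^ N - 1"
  proof -
    have "(U - 1) * W = (\<Sum>k<N. U ^ Suc k - U ^ k)"
      unfolding W_def sum_distrib_left by (rule sum.cong) (simp_all add: algebra_simps)
    also have "\<dots> = U ^ N - 1" using sum_lessThan_telescope[of "\<lambda>k. U ^ k" N] by (simp only: power_0)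
    finally show ?thesis .
  qed
  define b where "b = cpt (U ^ N)"
  have UNb: "U ^ N - 1 = UZ 0 b" by (rule uz_eqI) (simp_all add: b_def sc_power scU)
  have zb: "z * b = act z (U ^ N) - z" for z
    by (simp add: act_def b_def sc_power scU scaleC_one)
  have nb: "norm b \<le> 2"
  proof -
    have "norm b ^ 2 = norm (cstar b * b)" by (simp add: cstar_identity)
    also have "\<dots> \<le> norm (act (cstar b) (U ^ N)) + norm (cstar b)"
      unfolding zb by (rule norm_triangle_ineq4)
    also have "\<dots> = 2 * norm b" by (simp add: act_unitary[OF Upow])
    finally have "norm b ^ 2 \<le> 2 * norm b" .
    thus ?thesis by (cases "norm b = 0") (auto simp: power2_eq_square)
  qed
  define q where "q = act r W"
  have qq: "q + q = b"
  proof -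
    have "UZ 0 (act (r + r) W) = UZ 0 b" by (simp add: act_eq[symmetric] Um1[symmetric] tel UNb)
    thus ?thesis by (simp add: q_def act_add_left)
  qed
  have nq: "norm q \<le> 1"
  proof -
    have "q + q = scaleR 2 q" by (simp add: scaleR_2)
    hence "2 * norm q = norm b" using qq by (metis norm_scaleR abs_numeral)
    thus ?thesis using nb by simp
  qed
  have tT: "UZ 0 t = (1 - T) * UZ 0 r"
    by (rule uz_eqI) (simp_all add: T_def scaleC_one, metis hr add_diff_cancel_left' diff_add_cancel add.commute)
  have actt: "act t W = q - t * q"
  proof -
    have "UZ 0 (act t W) = (1 - T) * (UZ 0 r * W)" by (simp add: act_eq[symmetric] tT mult.assoc)
    also have "\<dots> = UZ 0 (q - t * q)" by (rule uz_eqI) (simp_all add: act_eq q_def T_def scaleC_one)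
    finally show ?thesis by simp
  qed
  have nactt: "norm (act t W) \<le> 3/2"
  proof -
    have "norm (act t W) \<le> norm q + norm (t * q)" unfolding actt by (rule norm_triangle_ineq4)
    also have "\<dots> \<le> 1 + 1/2 * 1" using nq lip[of q] by linarith
    finally show ?thesis by simp
  qed
  have st: "s = scaleC (- \<i>) t" by (simp add: t_def scaleC_scaleC scaleC_one)
  have "act s W = scaleC (- \<i>) (act t W)" by (simp only: st act_scaleC_left)
  hence nacts: "norm (act s W) \<le> 3/2" using nactt by (simp only: norm_scaleC) simp
  have jjs: "cstar j * j = scaleC (complex_of_real (1/c)) s"
    using c0 by (simp add: s_def scaleC_scaleC scaleC_one flip: of_real_mult)
  have nactjj: "norm (act (cstar j * j) W) \<le> K"
  proof -
    have "norm (act (cstar j * j) W) = (1/c) * norm (act s W)"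
      using c0 by (simp add: jjs act_scaleC_left norm_scaleC norm_divide)
    also have "\<dots> \<le> (1/c) * (3/2)" using nacts c0 by (intro mult_left_mono) auto
    finally show ?thesis by (simp add: K_def)
  qed
  define v where "v = act j W"
  have vv: "cstar v * v = lact (ustar W) (act (cstar j * j) W)"
  proof -
    have "UZ 0 (cstar v * v) = ustar (UZ 0 v) * UZ 0 v" by (simp add: ustar_UZ0)
    also have "\<dots> = ustar W * (UZ 0 (cstar j * j) * W)"
      by (simp add: v_def act_eq[symmetric] ustar_mult ustar_UZ0 mult.assoc UZ0_mult[symmetric] del: times_uz.simps)
    also have "\<dots> = UZ 0 (lact (ustar W) (act (cstar j * j) W))"
      by (simp add: act_eq lact_eq)
    finally show ?thesis by simp
  qed
  have nv2: "norm v ^ 2 \<le> real N * K"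
  proof -
    have "norm v ^ 2 = norm (cstar v * v)" by (simp add: cstar_identity)
    also have "\<dots> \<le> real N * norm (act (cstar j * j) W)" unfolding vv by (rule lactW)
    also have "\<dots> \<le> real N * K" using nactjj by (simp add: mult_left_mono)
    finally show ?thesis .
  qed
  have nv: "norm v \<le> real N * e"
  proof (rule power2_le_imp_le)
    have "real N * K \<le> real N * (real N * e ^ 2)" using NK by (simp add: mult_left_mono)
    thus "norm v ^ 2 \<le> (real N * e) ^ 2" using nv2 by (simp add: power_mult_distrib power2_eq_square mult_ac)
    show "0 \<le> real N * e" using e by simp
  qed
  define k where "k = - scaleC (complex_of_real (1 / real N)) (x * cpt W)"
  have kI: "k \<in> I" unfolding k_def using xI I by (simp add: ideal_neg ideal_facts)
  have kJ: "k \<in> J" unfolding k_def using cptW J by (simp add: ideal_neg ideal_facts)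
  have xk: "x - k = scaleC (complex_of_real (1 / real N)) (act x W)"
    using Npos by (simp add: k_def act_def scW scaleC_add_right scaleC_scaleC scaleC_one flip: of_real_mult)
  have "norm (x - k) = (1 / real N) * norm (act x W)"
    using Npos by (simp add: xk norm_scaleC norm_divide)
  also have "act x W = act (x - j) W + v" by (simp add: v_def act_add_left[symmetric])
  also have "(1 / real N) * norm (act (x - j) W + v) \<le> (1 / real N) * (real N * norm (x - j) + real N * e)"
    using Npos actW[of "x - j"] nv norm_triangle_ineq[of "act (x - j) W" v]
    by (intro mult_left_mono) auto
  also have "\<dots> = norm (x - j) + e" using Npos by (simp add: field_simps)
  finally show ?thesis using kI kJ by blast
qed

lemma half_pow_tendsto:
  assumes "\<And>n. dist (w n) z \<le> C * (1/2::real) ^ n"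
  shows "w \<longlonglongrightarrow> z"
proof -
  have "(\<lambda>n. C * (1/2::real) ^ n) \<longlonglongrightarrow> C * 0"
    by (intro tendsto_mult tendsto_const LIMSEQ_power_zero) simp
  hence lim: "(\<lambda>n. C * (1/2::real) ^ n) \<longlonglongrightarrow> 0" by simp
  have ev: "eventually (\<lambda>n. norm (dist (w n) z) \<le> C * (1/2::real) ^ n) sequentially"
    using assms by (simp add: always_eventually)
  have "(\<lambda>n. dist (w n) z) \<longlonglongrightarrow> 0"
    using ev lim by (rule Lim_null_comparison)
  thus ?thesis by (rule tendsto_dist_iff[THEN iffD2])
qed

lemma sum_ideal_closed:
  fixes I J :: "'a::cstar_algebra set"
  assumes I: "cstar_ideal I" and J: "cstar_ideal J"
  shows "closed {x + y | x y. x \<in> I \<and> y \<in> J}"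
proof -
  define S where "S = {x + y | x y. x \<in> I \<and> y \<in> J}"
  have "closure S \<subseteq> S"
  proof
    fix z assume z: "z \<in> closure S"
    have "\<forall>n. \<exists>y\<in>S. dist y z < (1/2::real) ^ n"
      using z unfolding closure_approachable by simp
    hence "\<forall>n. \<exists>y. y \<in> S \<and> dist y z < (1/2::real) ^ n" by blast
    then obtain w where "\<forall>n. w n \<in> S \<and> dist (w n) z < (1/2::real) ^ n"
      using choice[of "\<lambda>n y. y \<in> S \<and> dist y z < (1/2::real) ^ n"] by blast
    hence wS: "\<And>n. w n \<in> S" and wz: "\<And>n. dist (w n) z < (1/2::real) ^ n" by auto
    have wd: "norm (w (Suc n) - w n) \<le> 2 * (1/2::real) ^ n" for n
    proof -
      have "norm (w (Suc n) - w n) \<le> dist (w (Suc n)) z + dist (w n) z"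
        using dist_triangle2[of "w (Suc n)" "w n" z] by (simp add: dist_norm)
      also have "\<dots> \<le> (1/2) ^ Suc n + (1/2) ^ n" using wz[of n] wz[of "Suc n"] by linarith
      also have "\<dots> \<le> 2 * (1/2::real) ^ n" by simp
      finally show ?thesis .
    qed
    define Q where "Q n a a' \<longleftrightarrow> a' \<in> I \<and> w (Suc n) - a' \<in> J \<and> norm (a' - a) \<le> 3 * (1/2::real) ^ n"
      for n a a'
    have step: "\<exists>a'. Q n a a'" if "a \<in> I" "w n - a \<in> J" for n a
    proof -
      obtain p q where p: "p \<in> I" and q: "q \<in> J" and pq: "w (Suc n) = p + q"
        using wS[of "Suc n"] unfolding S_def by blast
      have xI: "p - a \<in> I" using p that I by (simp add: ideal_diff)
      have jJ: "(w n - a) - q \<in> J" using q that J by (simp add: ideal_diff)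
      obtain k where kI: "k \<in> I" and kJ: "k \<in> J"
        and k: "norm ((p - a) - k) \<le> norm ((p - a) - ((w n - a) - q)) + (1/2) ^ n"
        using key_dist[OF I J xI jJ, of "(1/2) ^ n"] by auto
      have eq: "(p - a) - ((w n - a) - q) = w (Suc n) - w n" by (simp add: pq algebra_simps)
      have k2: "norm ((p - a) - k) \<le> 3 * (1/2::real) ^ n" using k wd[of n] unfolding eq by simp
      have "Q n a (p - k)" unfolding Q_def
      proof (intro conjI)
        show "p - k \<in> I" using p kI I by (simp add: ideal_diff)
        show "w (Suc n) - (p - k) \<in> J" using q kJ J by (simp add: pq ideal_facts)
        show "norm (p - k - a) \<le> 3 * (1/2) ^ n" using k2 by (simp add: algebra_simps)
      qed
      thus ?thesis by blast
    qed
    obtain p0 q0 where p0: "p0 \<in> I" and q0: "q0 \<in> J" and pq0: "w 0 = p0 + q0"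
      using wS[of 0] unfolding S_def by blast
    define g where "g = rec_nat p0 (\<lambda>n a. SOME a'. Q n a a')"
    have g0: "g 0 = p0" by (simp add: g_def)
    have gS: "g (Suc n) = (SOME a'. Q n (g n) a')" for n by (simp add: g_def)
    have inv: "g n \<in> I \<and> w n - g n \<in> J" for n
    proof (induction n)
      case 0 then show ?case using p0 q0 by (simp add: g0 pq0)
    next
      case (Suc n)
      have "\<exists>a'. Q n (g n) a'" using step Suc by simp
      hence "Q n (g n) (g (Suc n))" unfolding gS by (rule someI_ex)
      then show ?case by (simp add: Q_def)
    qed
    have gd: "norm (g (Suc n) - g n) \<le> 3 * (1/2::real) ^ n" for n
    proof -
      have "\<exists>a'. Q n (g n) a'" using step inv by simp
      hence "Q n (g n) (g (Suc n))" unfolding gS by (rule someI_ex)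
      then show ?thesis by (simp add: Q_def)
    qed
    define d where "d n = g (Suc n) - g n" for n
    have "summable (\<lambda>n. 3 * (1/2::real) ^ n)" by (intro summable_mult summable_geometric) simp
    hence sd: "summable d" by (rule summable_comparison_test'[where N=0]) (simp add: d_def gd)
    have "(\<lambda>n. \<Sum>m<n. d m) \<longlonglongrightarrow> suminf d" using sd by (rule summable_LIMSEQ)
    hence "(\<lambda>n. g 0 + (\<Sum>m<n. d m)) \<longlonglongrightarrow> g 0 + suminf d" by (intro tendsto_add tendsto_const)
    moreover have "g 0 + (\<Sum>m<n. d m) = g n" for n
      unfolding d_def sum_lessThan_telescope by simp
    ultimately have ga: "g \<longlonglongrightarrow> g 0 + suminf d" by simp
    define a where "a = g 0 + suminf d"
    have aI: "a \<in> I" using closed_sequentially[OF ideal_facts(2)[OF I]] inv ga a_def by blast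
    have wz2: "w \<longlonglongrightarrow> z" by (rule half_pow_tendsto[where C=1]) (use wz in \<open>auto intro: less_imp_le\<close>)
    have lim2: "(\<lambda>n. w n - g n) \<longlonglongrightarrow> z - a" using wz2 ga a_def by (intro tendsto_diff) auto
    have zaJ: "z - a \<in> J" by (rule closed_sequentially[OF ideal_facts(2)[OF J] _ lim2]) (use inv in blast)
    show "z \<in> S" unfolding S_def using aI zaJ by (intro CollectI exI[of _ a] exI[of _ "z - a"]) simp
  qed
  thus ?thesis unfolding S_def by (simp add: closure_subset_eq)
qed

lemma sum_ideal:
  fixes I J :: "'a::cstar_algebra set"
  assumes I: "cstar_ideal I" and J: "cstar_ideal J"
  shows "cstar_ideal {x + y | x y. x \<in> I \<and> y \<in> J}"
proof -
  define S where "S = {x + y | x y. x \<in> I \<and> y \<in> J}"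
  have c1: "closed S" unfolding S_def by (rule sum_ideal_closed[OF I J])
  have c2: "0 \<in> S" unfolding S_def using ideal_facts(1)[OF I] ideal_facts(1)[OF J] by force
  have c3: "u + v \<in> S" if uS: "u \<in> S" and vS: "v \<in> S" for u v
  proof -
    obtain a b c d where "a \<in> I" "b \<in> J" "c \<in> I" "d \<in> J" "u = a + b" "v = c + d"
      using uS vS unfolding S_def by blast
    thus ?thesis using I J unfolding S_def
      by (intro CollectI exI[of _ "a + c"] exI[of _ "b + d"]) (simp add: ideal_facts algebra_simps)
  qed
  have c4: "scaleC c u \<in> S" if uS: "u \<in> S" for c u
  proof -
    obtain a b where "a \<in> I" "b \<in> J" "u = a + b" using uS unfolding S_def by blast
    thus ?thesis using I J unfolding S_def
      by (intro CollectI exI[of _ "scaleC c a"] exI[of _ "scaleC c b"]) (simp add: ideal_facts scaleC_add_right)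
  qed
  have c5: "e * u \<in> S \<and> u * e \<in> S" if uS: "u \<in> S" for e u
  proof -
    obtain a b where ab: "a \<in> I" "b \<in> J" "u = a + b" using uS unfolding S_def by blast
    have "e * u \<in> S" using ab I J unfolding S_def
      by (intro CollectI exI[of _ "e * a"] exI[of _ "e * b"]) (simp add: ideal_facts algebra_simps)
    moreover have "u * e \<in> S" using ab I J unfolding S_def
      by (intro CollectI exI[of _ "a * e"] exI[of _ "b * e"]) (simp add: ideal_facts algebra_simps)
    ultimately show ?thesis ..
  qed
  show ?thesis unfolding S_def[symmetric] cstar_ideal_def by (simp add: c1 c2 c3 c4 c5)
qed

lemma scaleC_tendsto:
  assumes "f \<longlonglongrightarrow> l"
  shows "(\<lambda>n. scaleC c (f n :: 'a::cstar_algebra)) \<longlonglongrightarrow> scaleC c l"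
proof -
  have "bounded_linear (scaleC c :: 'a \<Rightarrow> 'a)"
  proof (rule bounded_linear_intro[where K="cmod c"])
    show "scaleC c (x + y) = scaleC c x + scaleC c y" for x y by (rule scaleC_add_right)
    show "scaleC c (scaleR r x) = scaleR r (scaleC c x)" for r x
      by (simp add: scaleR_scaleC scaleC_scaleC mult.commute)
    show "norm (scaleC c x) \<le> norm x * cmod c" for x by (simp add: norm_scaleC mult.commute)
  qed
  thus ?thesis using assms by (rule bounded_linear.tendsto)
qed

lemma directed_union_ideal:
  fixes C :: "'a::cstar_algebra set set"
  assumes ne: "C \<noteq> {}" and id: "\<And>K. K \<in> C \<Longrightarrow> cstar_ideal K"
    and dir: "\<And>I J. I \<in> C \<Longrightarrow> J \<in> C \<Longrightarrow> \<exists>K\<in>C. I \<subseteq> K \<and> J \<subseteq> K"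
  shows "cstar_ideal (closure (\<Union>C))"
proof -
  let ?U = "\<Union>C"
  have addU: "x + y \<in> ?U" if xU: "x \<in> ?U" and yU: "y \<in> ?U" for x y
  proof -
    obtain I J where "I \<in> C" "J \<in> C" "x \<in> I" "y \<in> J" using xU yU by blast
    then obtain K where "K \<in> C" "x \<in> K" "y \<in> K" using dir by blast
    thus ?thesis using ideal_facts(3)[OF id[of K]] by blast
  qed
  have c1: "closed (closure ?U)" by simp
  obtain K where KC: "K \<in> C" using ne by blast
  have "0 \<in> K" by (rule ideal_facts(1)[OF id[OF KC]])
  with KC have "0 \<in> ?U" by (rule UnionI)
  hence c2: "0 \<in> closure ?U" by (rule closure_subset[THEN subsetD])
  have c3: "x + y \<in> closure ?U" if x: "x \<in> closure ?U" and y: "y \<in> closure ?U" for x y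
  proof -
    obtain f where f: "\<And>n. f n \<in> ?U" "f \<longlonglongrightarrow> x" using x unfolding closure_sequential by blast
    obtain g where g: "\<And>n. g n \<in> ?U" "g \<longlonglongrightarrow> y" using y unfolding closure_sequential by blast
    have "(\<lambda>n. f n + g n) \<longlonglongrightarrow> x + y" using f(2) g(2) by (rule tendsto_add)
    moreover have "\<forall>n. f n + g n \<in> ?U" using f(1) g(1) addU by simp
    ultimately show ?thesis by (intro closure_sequential[THEN iffD2] exI[of _ "\<lambda>n. f n + g n"]) simp
  qed
  have c4: "scaleC c x \<in> closure ?U" if x: "x \<in> closure ?U" for c x
  proof -
    obtain f where f: "\<And>n. f n \<in> ?U" "f \<longlonglongrightarrow> x" using x unfolding closure_sequential by blast
    have "\<forall>n. scaleC c (f n) \<in> ?U"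
    proof
      fix n obtain K where K: "K \<in> C" "f n \<in> K" using f(1)[of n] by blast
      thus "scaleC c (f n) \<in> ?U" using ideal_facts(4)[OF id[OF K(1)] K(2)] by blast
    qed
    moreover have "(\<lambda>n. scaleC c (f n)) \<longlonglongrightarrow> scaleC c x" by (rule scaleC_tendsto[OF f(2)])
    ultimately show ?thesis by (intro closure_sequential[THEN iffD2] exI[of _ "\<lambda>n. scaleC c (f n)"]) simp
  qed
  have c5: "a * x \<in> closure ?U \<and> x * a \<in> closure ?U" if x: "x \<in> closure ?U" for a x
  proof -
    obtain f where f: "\<And>n. f n \<in> ?U" "f \<longlonglongrightarrow> x" using x unfolding closure_sequential by blast
    have m: "a * f n \<in> ?U \<and> f n * a \<in> ?U" for n
    proof -
      obtain K where K: "K \<in> C" "f n \<in> K" using f(1)[of n] by blast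
      thus ?thesis using ideal_facts(5,6)[OF id[OF K(1)] K(2)] by blast
    qed
    have "(\<lambda>n. a * f n) \<longlonglongrightarrow> a * x" by (rule tendsto_mult_left[OF f(2)])
    hence l: "a * x \<in> closure ?U" using m
      by (intro closure_sequential[THEN iffD2] exI[of _ "\<lambda>n. a * f n"]) simp
    have "(\<lambda>n. f n * a) \<longlonglongrightarrow> x * a" by (rule tendsto_mult_right[OF f(2)])
    hence r: "x * a \<in> closure ?U" using m
      by (intro closure_sequential[THEN iffD2] exI[of _ "\<lambda>n. f n * a"]) simp
    show ?thesis using l r ..
  qed
  show ?thesis unfolding cstar_ideal_def by (simp add: c1 c2 c3 c4 c5)
qed

theorem corollary1p4:
  fixes P :: "'a::cstar_algebra set \<Rightarrow> bool"
  assumes zero: "P {0}"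
    and sum: "\<And>I J. cstar_ideal I \<Longrightarrow> cstar_ideal J \<Longrightarrow> P I \<Longrightarrow> P J \<Longrightarrow>
               P {x + y | x y. x \<in> I \<and> y \<in> J}"
    and dir_union: "\<And>(L :: 'a set set) le F.
               directed_set L le \<Longrightarrow>
               (\<forall>l\<in>L. cstar_ideal (F l) \<and> P (F l)) \<Longrightarrow>
               (\<forall>l\<in>L. \<forall>m\<in>L. le l m \<longrightarrow> F l \<subseteq> F m) \<Longrightarrow>
               P (closure (\<Union>l\<in>L. F l))"
  shows "\<exists>I. cstar_ideal I \<and> P I \<and> (\<forall>J. cstar_ideal J \<and> P J \<longrightarrow> J \<subseteq> I)"
proof -
  define C where "C = {K :: 'a set. cstar_ideal K \<and> P K}"
  have z: "cstar_ideal ({0} :: 'a set)" unfolding cstar_ideal_def by simp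
  hence zC: "{0} \<in> C" using zero by (simp add: C_def)
  have dir: "\<exists>K\<in>C. I \<subseteq> K \<and> J \<subseteq> K" if "I \<in> C" "J \<in> C" for I J
  proof -
    let ?K = "{x + y | x y. x \<in> I \<and> y \<in> J}"
    have I: "cstar_ideal I" "P I" and J: "cstar_ideal J" "P J" using that by (auto simp: C_def)
    have "?K \<in> C" using sum_ideal[OF I(1) J(1)] sum[OF I(1) J(1) I(2) J(2)] by (simp add: C_def)
    moreover have "I \<subseteq> ?K"
    proof
      fix x assume "x \<in> I" thus "x \<in> ?K" using ideal_facts(1)[OF J(1)] by force
    qed
    moreover have "J \<subseteq> ?K"
    proof
      fix y assume "y \<in> J" thus "y \<in> ?K" using ideal_facts(1)[OF I(1)] by force
    qed
    ultimately show ?thesis by blast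
  qed
  have ds: "directed_set C (\<subseteq>)"
    unfolding directed_set_def using zC dir by blast
  have "P (closure (\<Union>l\<in>C. (\<lambda>l. l) l))"
    by (rule dir_union[OF ds]) (auto simp: C_def)
  hence PU: "P (closure (\<Union>C))" by simp
  have iU: "cstar_ideal (closure (\<Union>C))"
    by (rule directed_union_ideal) (use zC dir in \<open>auto simp: C_def\<close>)
  show ?thesis
  proof (intro exI conjI allI impI)
    show "cstar_ideal (closure (\<Union>C))" by (rule iU)
    show "P (closure (\<Union>C))" by (rule PU)
    fix J assume "cstar_ideal J \<and> P J"
    hence "J \<in> C" by (simp add: C_def)
    thus "J \<subseteq> closure (\<Union>C)" using closure_subset by blast
  qed
qed

end
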